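(* A real $4\times4$ array $(c_{i,j})_{0\le i,j\le3}$ satisfies the fourteen equations (E0), (R1)–(R9), (O1)–(O4) if and only if there exist real numbers $p=c_{3,2}$, $q=c_{3,3}$, a choice $\mu\in\{\mu_1,\mu_2\}$, a sign $\sigma\in\{+1,-1\}$ and a type $T\in\{A,B\}$ such that the corresponding discriminant is nonnegative and the entries are given as follows. Type A: with $\Delta=\Delta_1$ if $\mu=\mu_1$ and $\Delta=\Delta_2$ if $\mu=\mu_2$ (and $\Delta\ge0$), $c_{2,3}=\tfrac14+2\mu-\tfrac12(p+q)+\tfrac{\sigma}{8}\sqrt{\Delta}$, $c_{2,2}=\tfrac34+4\mu-p-q-c_{2,3}$, $c_{3,1}=\mu-q$, $c_{1,3}=c_{3,1}$. Type B: with $\Delta_3\ge0$, $c_{2,3}=-\tfrac12(p+q)+\tfrac{\sigma}{8}\sqrt{\Delta_3}$, $c_{2,2}=\tfrac14-p-q-c_{2,3}$, $c_{3,1}=\mu-q$, $c_{1,3}=\tfrac12-2q-c_{3,1}$. In both types the remaining ten entries are $c_{0,0}=-c_{3,1}-2c_{3,3}-c_{1,3}+c_{2,2}$, $c_{0,1}=-c_{3,1}-2c_{3,3}+\tfrac12+c_{2,3}-c_{1,3}$, $c_{0,2}=c_{1,3}+c_{3,3}+\tfrac12-c_{2,2}$, $c_{0,3}=c_{3,3}-c_{2,3}+c_{1,3}$, $c_{1,0}=-c_{3,1}-2c_{3,3}+c_{3,2}-c_{1,3}+\tfrac12$, $c_{1,1}=1-c_{1,3}-c_{3,1}-c_{3,3}$,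 $c_{1,2}=-c_{3,2}+c_{1,3}+c_{3,3}+\tfrac12$, $c_{2,0}=c_{3,1}+c_{3,3}-c_{2,2}+\tfrac12$, $c_{2,1}=c_{3,1}+c_{3,3}+\tfrac12-c_{2,3}$, $c_{3,0}=c_{3,1}+c_{3,3}-c_{3,2}$.
   Context: $\mu_1=\frac{1+\sqrt3}{4}$, $\mu_2=\frac{1-\sqrt3}{4}$, and with $p=c_{3,2}$, $q=c_{3,3}$: $\Delta_1=-34-20\sqrt3+32\sqrt3\,q+32\sqrt3\,p-48q^2+32q-32pq+48p-48p^2$; $\Delta_2=-34+20\sqrt3-32\sqrt3\,q-32\sqrt3\,p-48q^2+32q-32pq+48p-48p^2$; $\Delta_3=-48p^2-32pq-48q^2+2-16q$. (E0): $\sum_{i=0}^3\sum_{j=0}^3 c_{i,j}=4$. Regularity equations: (R1) $c_{0,1}+c_{0,3}+c_{2,1}+c_{2,3}=c_{0,0}+c_{0,2}+c_{2,0}+c_{2,2}$; (R2) $c_{1,1}+c_{1,3}+c_{3,1}+c_{3,3}=c_{0,0}+c_{0,2}+c_{2,0}+c_{2,2}$; (R3) $c_{1,0}+c_{1,2}+c_{3,0}+c_{3,2}=c_{0,0}+c_{0,2}+c_{2,0}+c_{2,2}$; (R4) $c_{2,1}+c_{2,3}=c_{2,0}+c_{2,2}$; (R5) $c_{1,1}+c_{1,3}+3c_{3,1}+3c_{3,3}=2c_{2,0}+2c_{2,2}$; (R6) $c_{1,0}+c_{1,2}+3c_{3,0}+3c_{3,2}=2c_{2,0}+2c_{2,2}$;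 (R7) $c_{0,1}+c_{2,1}+3c_{0,3}+3c_{2,3}=2c_{0,2}+2c_{2,2}$; (R8) $c_{1,1}+c_{3,1}+3c_{1,3}+3c_{3,3}=2c_{0,2}+2c_{2,2}$; (R9) $c_{1,2}+c_{3,2}=c_{0,2}+c_{2,2}$. Orthogonality equations: (O1) $\sum_{i=0}^3\sum_{j=0}^3 c_{i,j}^2=4$; (O2) $c_{3,3}c_{1,1}+c_{3,2}c_{1,0}+c_{2,3}c_{0,1}+c_{2,2}c_{0,0}=0$; (O3) $c_{3,3}c_{1,3}+c_{3,2}c_{1,2}+c_{2,3}c_{0,3}+c_{2,2}c_{0,2}+c_{3,1}c_{1,1}+c_{3,0}c_{1,0}+c_{2,1}c_{0,1}+c_{2,0}c_{0,0}=0$; (O4) $c_{3,3}c_{3,1}+c_{3,2}c_{3,0}+c_{2,3}c_{2,1}+c_{2,2}c_{2,0}+c_{1,3}c_{1,1}+c_{1,2}c_{1,0}+c_{0,3}c_{0,1}+c_{0,2}c_{0,0}=0$. *)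

theory Defs
  imports Complex_Main
begin

text \<open>A real 4x4 array is modelled as c :: nat => nat => real; only entries c i j with
  i, j in {0..3} are relevant.\<close>

definition mu1 :: real where "mu1 = (1 + sqrt 3) / 4"
definition mu2 :: real where "mu2 = (1 - sqrt 3) / 4"

definition Delta1 :: "real \<Rightarrow> real \<Rightarrow> real" where
  "Delta1 p q = -34 - 20 * sqrt 3 + 32 * sqrt 3 * q + 32 * sqrt 3 * p - 48 * q^2 + 32 * q
     - 32 * p * q + 48 * p - 48 * p^2"
definition Delta2 :: "real \<Rightarrow> real \<Rightarrow> real" where
  "Delta2 p q = -34 + 20 * sqrt 3 - 32 * sqrt 3 * q - 32 * sqrt 3 * p - 48 * q^2 + 32 * q
     - 32 * p * q + 48 * p - 48 * p^2"
definition Delta3 :: "real \<Rightarrow> real \<Rightarrow> real" where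
  "Delta3 p q = -48 * p^2 - 32 * p * q - 48 * q^2 + 2 - 16 * q"

definition all_equations :: "(nat \<Rightarrow> nat \<Rightarrow> real) \<Rightarrow> bool" where
  "all_equations c \<longleftrightarrow>
    \<comment> \<open>E0\<close>
    (\<Sum>i\<le>3. \<Sum>j\<le>3. c i j) = 4 \<and>
    \<comment> \<open>R1\<close>
    c 0 1 + c 0 3 + c 2 1 + c 2 3 = c 0 0 + c 0 2 + c 2 0 + c 2 2 \<and>
    \<comment> \<open>R2\<close>
    c 1 1 + c 1 3 + c 3 1 + c 3 3 = c 0 0 + c 0 2 + c 2 0 + c 2 2 \<and>
    \<comment> \<open>R3\<close>
    c 1 0 + c 1 2 + c 3 0 + c 3 2 = c 0 0 + c 0 2 + c 2 0 + c 2 2 \<and>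
    \<comment> \<open>R4\<close>
    c 2 1 + c 2 3 = c 2 0 + c 2 2 \<and>
    \<comment> \<open>R5\<close>
    c 1 1 + c 1 3 + 3 * c 3 1 + 3 * c 3 3 = 2 * c 2 0 + 2 * c 2 2 \<and>
    \<comment> \<open>R6\<close>
    c 1 0 + c 1 2 + 3 * c 3 0 + 3 * c 3 2 = 2 * c 2 0 + 2 * c 2 2 \<and>
    \<comment> \<open>R7\<close>
    c 0 1 + c 2 1 + 3 * c 0 3 + 3 * c 2 3 = 2 * c 0 2 + 2 * c 2 2 \<and>
    \<comment> \<open>R8\<close>
    c 1 1 + c 3 1 + 3 * c 1 3 + 3 * c 3 3 = 2 * c 0 2 + 2 * c 2 2 \<and>
    \<comment> \<open>R9\<close>
    c 1 2 + c 3 2 = c 0 2 + c 2 2 \<and>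
    \<comment> \<open>O1\<close>
    (\<Sum>i\<le>3. \<Sum>j\<le>3. (c i j)^2) = 4 \<and>
    \<comment> \<open>O2\<close>
    c 3 3 * c 1 1 + c 3 2 * c 1 0 + c 2 3 * c 0 1 + c 2 2 * c 0 0 = 0 \<and>
    \<comment> \<open>O3\<close>
    c 3 3 * c 1 3 + c 3 2 * c 1 2 + c 2 3 * c 0 3 + c 2 2 * c 0 2
      + c 3 1 * c 1 1 + c 3 0 * c 1 0 + c 2 1 * c 0 1 + c 2 0 * c 0 0 = 0 \<and>
    \<comment> \<open>O4\<close>
    c 3 3 * c 3 1 + c 3 2 * c 3 0 + c 2 3 * c 2 1 + c 2 2 * c 2 0
      + c 1 3 * c 1 1 + c 1 2 * c 1 0 + c 0 3 * c 0 1 + c 0 2 * c 0 0 = 0"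

definition param_form ::
  "(nat \<Rightarrow> nat \<Rightarrow> real) \<Rightarrow> real \<Rightarrow> real \<Rightarrow> real \<Rightarrow> real \<Rightarrow> bool \<Rightarrow> bool" where
  "param_form c p q \<mu> \<sigma> typeA \<longleftrightarrow>
    c 3 2 = p \<and> c 3 3 = q \<and>
    (if typeA then
       (let \<Delta> = (if \<mu> = mu1 then Delta1 p q else Delta2 p q) in
         \<Delta> \<ge> 0 \<and>
         c 2 3 = 1/4 + 2 * \<mu> - (p + q) / 2 + \<sigma> / 8 * sqrt \<Delta> \<and>
         c 2 2 = 3/4 + 4 * \<mu> - p - q - c 2 3 \<and>
         c 3 1 = \<mu> - q \<and>
         c 1 3 = c 3 1)
     else
       Delta3 p q \<ge> 0 \<and>
       c 2 3 = - (p + q) / 2 + \<sigma> / 8 * sqrt (Delta3 p q) \<and>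
       c 2 2 = 1/4 - p - q - c 2 3 \<and>
       c 3 1 = \<mu> - q \<and>
       c 1 3 = 1/2 - 2 * q - c 3 1) \<and>
    c 0 0 = - c 3 1 - 2 * c 3 3 - c 1 3 + c 2 2 \<and>
    c 0 1 = - c 3 1 - 2 * c 3 3 + 1/2 + c 2 3 - c 1 3 \<and>
    c 0 2 = c 1 3 + c 3 3 + 1/2 - c 2 2 \<and>
    c 0 3 = c 3 3 - c 2 3 + c 1 3 \<and>
    c 1 0 = - c 3 1 - 2 * c 3 3 + c 3 2 - c 1 3 + 1/2 \<and>
    c 1 1 = 1 - c 1 3 - c 3 1 - c 3 3 \<and>
    c 1 2 = - c 3 2 + c 1 3 + c 3 3 + 1/2 \<and>
    c 2 0 = c 3 1 + c 3 3 - c 2 2 + 1/2 \<and>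
    c 2 1 = c 3 1 + c 3 3 + 1/2 - c 2 3 \<and>
    c 3 0 = c 3 1 + c 3 3 - c 3 2"

end

theory Submission imports Defs begin

definition lin_form :: "(nat \<Rightarrow> nat \<Rightarrow> real) \<Rightarrow> bool" where
 "lin_form c \<longleftrightarrow>
    c 0 0 = - c 3 1 - 2 * c 3 3 - c 1 3 + c 2 2 \<and>
    c 0 1 = - c 3 1 - 2 * c 3 3 + 1/2 + c 2 3 - c 1 3 \<and>
    c 0 2 = c 1 3 + c 3 3 + 1/2 - c 2 2 \<and>
    c 0 3 = c 3 3 - c 2 3 + c 1 3 \<and>
    c 1 0 = - c 3 1 - 2 * c 3 3 + c 3 2 - c 1 3 + 1/2 \<and>
    c 1 1 = 1 - c 1 3 - c 3 1 - c 3 3 \<and>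
    c 1 2 = - c 3 2 + c 1 3 + c 3 3 + 1/2 \<and>
    c 2 0 = c 3 1 + c 3 3 - c 2 2 + 1/2 \<and>
    c 2 1 = c 3 1 + c 3 3 + 1/2 - c 2 3 \<and>
    c 3 0 = c 3 1 + c 3 3 - c 3 2"

definition Q1 :: "real \<Rightarrow> real \<Rightarrow> real \<Rightarrow> real \<Rightarrow> real \<Rightarrow> real \<Rightarrow> real" where
 "Q1 a b x y p q = 8*a^2 + 8*a*b - 4*a*x - 4*a*y - 4*a*p + 20*a*q - 2*a + 8*b^2 - 4*b*x - 4*b*y - 4*b*p + 20*b*q - 2*b + 4*x^2 - 8*x*q - 2*x + 4*y^2 - 8*y*q + 4*p^2 - 8*p*q + 20*q^2 - 2*q + (-3/2)"
definition Q2 :: "real \<Rightarrow> real \<Rightarrow> real \<Rightarrow> real \<Rightarrow> real \<Rightarrow> real \<Rightarrow> real" where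
 "Q2 a b x y p q = -1*a*x - 1*a*y - 1*a*p - 1*a*q - 1*b*x - 1*b*y - 1*b*p - 1*b*q + 1*x^2 - 2*x*q + 1*y^2 - 2*y*q + (1/2)*y + 1*p^2 - 2*p*q + (1/2)*p - 1*q^2 + 1*q"
definition Q3 :: "real \<Rightarrow> real \<Rightarrow> real \<Rightarrow> real \<Rightarrow> real \<Rightarrow> real \<Rightarrow> real" where
 "Q3 a b x y p q = -4*a^2 - 4*a*b + 2*a*x + 2*a*y + 2*a*p - 10*a*q + 1*a + 2*b*x + 2*b*y + 2*b*p - 2*b*q - 1*b - 2*x^2 + 4*x*q + 1*x - 2*y^2 + 4*y*q - 2*p^2 + 4*p*q - 6*q^2 - 1*q + (1/4)"
definition Q4 :: "real \<Rightarrow> real \<Rightarrow> real \<Rightarrow> real \<Rightarrow> real \<Rightarrow> real \<Rightarrow> real" where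
 "Q4 a b x y p q = -4*a*b + 2*a*x + 2*a*y + 2*a*p - 2*a*q - 1*a - 4*b^2 + 2*b*x + 2*b*y + 2*b*p - 10*b*q + 1*b - 2*x^2 + 4*x*q + 1*x - 2*y^2 + 4*y*q - 2*p^2 + 4*p*q - 6*q^2 - 1*q + (1/4)"

lemma idQ1: fixes a b x y p q :: real
  shows "(- a - 2 * q - b + x)^2 + (- a - 2 * q + 1/2 + y - b)^2 + (b + q + 1/2 - x)^2 + (q - y + b)^2 + (- a - 2 * q + p - b + 1/2)^2 + (1 - b - a - q)^2 + (- p + b + q + 1/2)^2 + (b)^2 + (a + q - x + 1/2)^2 + (a + q + 1/2 - y)^2 + (x)^2 + (y)^2 + (a + q - p)^2 + (a)^2 + (p)^2 + (q)^2 - 4 = Q1 a b x y p q"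
  unfolding Q1_def power2_eq_square by algebra

lemma idQ2: fixes a b x y p q :: real
  shows "(q) * (1 - b - a - q) + (p) * (- a - 2 * q + p - b + 1/2) + (y) * (- a - 2 * q + 1/2 + y - b) + (x) * (- a - 2 * q - b + x) = Q2 a b x y p q"
  unfolding Q2_def power2_eq_square by algebra

lemma idQ3: fixes a b x y p q :: real
  shows "(q) * (b) + (p) * (- p + b + q + 1/2) + (y) * (q - y + b) + (x) * (b + q + 1/2 - x) + (a) * (1 - b - a - q) + (a + q - p) * (- a - 2 * q + p - b + 1/2) + (a + q + 1/2 - y) * (- a - 2 * q + 1/2 + y - b) + (a + q - x + 1/2) * (- a - 2 * q - b + x) = Q3 a b x y p q"
  unfolding Q3_def power2_eq_square by algebra

lemma idQ4: fixes a b x y p q :: real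
  shows "(q) * (a) + (p) * (a + q - p) + (y) * (a + q + 1/2 - y) + (x) * (a + q - x + 1/2) + (b) * (1 - b - a - q) + (- p + b + q + 1/2) * (- a - 2 * q + p - b + 1/2) + (q - y + b) * (- a - 2 * q + 1/2 + y - b) + (b + q + 1/2 - x) * (- a - 2 * q - b + x) = Q4 a b x y p q"
  unfolding Q4_def power2_eq_square by algebra

lemma sum4: "(\<Sum>i\<le>(3::nat). f i) = f 0 + f 1 + f 2 + (f 3 :: real)"
  by (simp add: eval_nat_numeral)

lemma all_eq_iff:
  "all_equations c \<longleftrightarrow> lin_form c \<and>
     Q1 (c 3 1) (c 1 3) (c 2 2) (c 2 3) (c 3 2) (c 3 3) = 0 \<and>
     Q2 (c 3 1) (c 1 3) (c 2 2) (c 2 3) (c 3 2) (c 3 3) = 0 \<and>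
     Q3 (c 3 1) (c 1 3) (c 2 2) (c 2 3) (c 3 2) (c 3 3) = 0 \<and>
     Q4 (c 3 1) (c 1 3) (c 2 2) (c 2 3) (c 3 2) (c 3 3) = 0"
proof -
  have lin: "lin_form c \<longleftrightarrow>
    (\<Sum>i\<le>3. \<Sum>j\<le>3. c i j) = 4 \<and>
    c 0 1 + c 0 3 + c 2 1 + c 2 3 = c 0 0 + c 0 2 + c 2 0 + c 2 2 \<and>
    c 1 1 + c 1 3 + c 3 1 + c 3 3 = c 0 0 + c 0 2 + c 2 0 + c 2 2 \<and>
    c 1 0 + c 1 2 + c 3 0 + c 3 2 = c 0 0 + c 0 2 + c 2 0 + c 2 2 \<and>
    c 2 1 + c 2 3 = c 2 0 + c 2 2 \<and>
    c 1 1 + c 1 3 + 3 * c 3 1 + 3 * c 3 3 = 2 * c 2 0 + 2 * c 2 2 \<and>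
    c 1 0 + c 1 2 + 3 * c 3 0 + 3 * c 3 2 = 2 * c 2 0 + 2 * c 2 2 \<and>
    c 0 1 + c 2 1 + 3 * c 0 3 + 3 * c 2 3 = 2 * c 0 2 + 2 * c 2 2 \<and>
    c 1 1 + c 3 1 + 3 * c 1 3 + 3 * c 3 3 = 2 * c 0 2 + 2 * c 2 2 \<and>
    c 1 2 + c 3 2 = c 0 2 + c 2 2"
    unfolding lin_form_def sum4 by (intro iffI; elim conjE; intro conjI; linarith)
  have q: "lin_form c \<Longrightarrow>
    (\<Sum>i\<le>3. \<Sum>j\<le>3. (c i j)^2) - 4 = Q1 (c 3 1) (c 1 3) (c 2 2) (c 2 3) (c 3 2) (c 3 3) \<and>
    c 3 3 * c 1 1 + c 3 2 * c 1 0 + c 2 3 * c 0 1 + c 2 2 * c 0 0 = Q2 (c 3 1) (c 1 3) (c 2 2) (c 2 3) (c 3 2) (c 3 3) \<and>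
    c 3 3 * c 1 3 + c 3 2 * c 1 2 + c 2 3 * c 0 3 + c 2 2 * c 0 2
      + c 3 1 * c 1 1 + c 3 0 * c 1 0 + c 2 1 * c 0 1 + c 2 0 * c 0 0 = Q3 (c 3 1) (c 1 3) (c 2 2) (c 2 3) (c 3 2) (c 3 3) \<and>
    c 3 3 * c 3 1 + c 3 2 * c 3 0 + c 2 3 * c 2 1 + c 2 2 * c 2 0
      + c 1 3 * c 1 1 + c 1 2 * c 1 0 + c 0 3 * c 0 1 + c 0 2 * c 0 0 = Q4 (c 3 1) (c 1 3) (c 2 2) (c 2 3) (c 3 2) (c 3 3)"
    unfolding lin_form_def sum4
    apply (elim conjE) apply (simp only:)
    apply (intro conjI)
    using idQ1[where a="c 3 1" and b="c 1 3" and x="c 2 2" and y="c 2 3" and p="c 3 2" and q="c 3 3"]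
      idQ2[where a="c 3 1" and b="c 1 3" and x="c 2 2" and y="c 2 3" and p="c 3 2" and q="c 3 3"]
      idQ3[where a="c 3 1" and b="c 1 3" and x="c 2 2" and y="c 2 3" and p="c 3 2" and q="c 3 3"]
      idQ4[where a="c 3 1" and b="c 1 3" and x="c 2 2" and y="c 2 3" and p="c 3 2" and q="c 3 3"]
    by linarith+
  show ?thesis
  proof
    assume A: "all_equations c"
    then have L: "lin_form c" using lin unfolding all_equations_def by blast
    show "lin_form c \<and> Q1 (c 3 1) (c 1 3) (c 2 2) (c 2 3) (c 3 2) (c 3 3) = 0 \<and>
     Q2 (c 3 1) (c 1 3) (c 2 2) (c 2 3) (c 3 2) (c 3 3) = 0 \<and>
     Q3 (c 3 1) (c 1 3) (c 2 2) (c 2 3) (c 3 2) (c 3 3) = 0 \<and>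
     Q4 (c 3 1) (c 1 3) (c 2 2) (c 2 3) (c 3 2) (c 3 3) = 0"
      using q[OF L] A L unfolding all_equations_def by (elim conjE) (intro conjI; linarith)
  next
    assume B: "lin_form c \<and> Q1 (c 3 1) (c 1 3) (c 2 2) (c 2 3) (c 3 2) (c 3 3) = 0 \<and>
     Q2 (c 3 1) (c 1 3) (c 2 2) (c 2 3) (c 3 2) (c 3 3) = 0 \<and>
     Q3 (c 3 1) (c 1 3) (c 2 2) (c 2 3) (c 3 2) (c 3 3) = 0 \<and>
     Q4 (c 3 1) (c 1 3) (c 2 2) (c 2 3) (c 3 2) (c 3 3) = 0"
    then have L: "lin_form c" by blast
    note L2 = lin[THEN iffD1, OF L]
    show "all_equations c" unfolding all_equations_def
      using q[OF L] B L2 by (elim conjE) (intro conjI; linarith)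
  qed
qed


definition DA :: "real \<Rightarrow> real \<Rightarrow> real \<Rightarrow> real" where
  "DA p q m = -48*p^2 - 32*p*q + 128*p*m + 16*p - 48*q^2 + 128*q*m - 80*m - 14"

lemma DA1: "DA p q mu1 = Delta1 p q"
  unfolding DA_def Delta1_def mu1_def by (simp add: field_simps)
lemma DA2: "DA p q mu2 = Delta2 p q"
  unfolding DA_def Delta2_def mu2_def by (simp add: field_simps)

lemma mu12_ne: "mu1 \<noteq> mu2"
  unfolding mu1_def mu2_def by simp

lemma mu_sq: "m \<in> {mu1, mu2} \<Longrightarrow> m^2 = m/2 + 1/8"
proof -
  have s3: "sqrt 3 * sqrt 3 = (3::real)" by simp
  have 1: "mu1^2 = mu1/2 + 1/8" unfolding mu1_def power2_eq_square
    by (simp add: algebra_simps s3; simp add: field_simps)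
  have 2: "mu2^2 = mu2/2 + 1/8" unfolding mu2_def power2_eq_square
    by (simp add: algebra_simps s3; simp add: field_simps)
  assume "m \<in> {mu1, mu2}" then show ?thesis using 1 2 by auto
qed

lemma mu_roots: fixes t :: real assumes "8*t^2 - 4*t - 1 = 0" shows "t \<in> {mu1, mu2}"
proof -
  have s3: "sqrt 3 * sqrt 3 = (3::real)" by simp
  have "(t - mu1) * (t - mu2) = 0"
    using assms unfolding mu1_def mu2_def
    by (simp add: algebra_simps power2_eq_square s3) (simp add: field_simps)
  then show ?thesis by auto
qed

lemma sigma_choice: fixes y cen D :: real
  assumes "(8*(y - cen))^2 = D"
  shows "D \<ge> 0 \<and> (\<exists>\<sigma>\<in>{1,-1}. y = cen + \<sigma>/8 * sqrt D)"
proof -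
  have D0: "D \<ge> 0" using assms by auto
  have "sqrt D = \<bar>8*(y-cen)\<bar>" using assms by (metis real_sqrt_abs)
  show ?thesis
  proof (cases "y \<ge> cen")
    case True
    then have "y = cen + 1/8 * sqrt D" using \<open>sqrt D = _\<close> by (simp add: field_simps)
    then show ?thesis using D0 by blast
  next
    case False
    then have "y = cen + (-1)/8 * sqrt D" using \<open>sqrt D = _\<close> by (simp add: field_simps)
    then show ?thesis using D0 by blast
  qed
qed


definition tcond :: "real \<Rightarrow> real \<Rightarrow> real \<Rightarrow> real \<Rightarrow> real \<Rightarrow> real \<Rightarrow> real \<Rightarrow> real \<Rightarrow> bool \<Rightarrow> bool" where
  "tcond a b x y p q m \<sigma> T \<longleftrightarrow>
    (if T then
       (let \<Delta> = (if m = mu1 then Delta1 p q else Delta2 p q) in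
         \<Delta> \<ge> 0 \<and>
         y = 1/4 + 2 * m - (p + q) / 2 + \<sigma> / 8 * sqrt \<Delta> \<and>
         x = 3/4 + 4 * m - p - q - y \<and>
         a = m - q \<and>
         b = a)
     else
       Delta3 p q \<ge> 0 \<and>
       y = - (p + q) / 2 + \<sigma> / 8 * sqrt (Delta3 p q) \<and>
       x = 1/4 - p - q - y \<and>
       a = m - q \<and>
       b = 1/2 - 2 * q - a)"

lemma Delta_sel: "m \<in> {mu1, mu2} \<Longrightarrow> (if m = mu1 then Delta1 p q else Delta2 p q) = DA p q m"
  using DA1 DA2 by auto

lemma core_fwd:
  fixes a b x y p q :: real
  assumes Q: "Q1 a b x y p q = 0" "Q2 a b x y p q = 0" "Q3 a b x y p q = 0" "Q4 a b x y p q = 0"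
  shows "\<exists>m \<sigma> T. m \<in> {mu1, mu2} \<and> \<sigma> \<in> {1, -1} \<and> tcond a b x y p q m \<sigma> T"
proof -
  define m where "m = a + q"
  have "Q1 a b x y p q + 2 * Q4 a b x y p q = 8*(a+q)^2 - 4*(a+q) - 1"
    unfolding Q1_def Q4_def by algebra
  then have "8*m^2 - 4*m - 1 = 0" using Q unfolding m_def by simp
  then have mm: "m \<in> {mu1, mu2}" by (rule mu_roots)
  have msq: "m^2 = m/2 + 1/8" using mu_sq[OF mm] .
  have am: "a = m - q" unfolding m_def by simp
  have "Q3 a b x y p q - Q4 a b x y p q = (a-b)*(2-4*(a+b)-8*q)"
    unfolding Q3_def Q4_def by algebra
  then have fac: "(a-b)*(2-4*(a+b)-8*q) = 0" using Q by simp
  have "Q3 a b x y p q + 2 * Q2 a b x y p q = -4*a^2-4*a*b-12*a*q+a-4*b*q-b+x+y+p-8*q^2+q+1/4"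
    unfolding Q3_def Q2_def by algebra
  then have l: "-4*a^2-4*a*b-12*a*q+a-4*b*q-b+x+y+p-8*q^2+q+1/4 = 0" using Q by simp
  from fac consider (A) "b = a" | (B) "2-4*(a+b)-8*q = 0" by auto
  then show ?thesis
  proof cases
    case A
    have xe: "x = 3/4 + 4 * m - p - q - y" using l A am msq by algebra
    have "(8*(y - (1/4 + 2 * m - (p + q) / 2)))^2 = DA p q m"
      using Q(2) A am msq xe unfolding Q2_def DA_def by algebra
    then have "(8*(y - (1/4 + 2 * m - (p + q) / 2)))^2 = (if m = mu1 then Delta1 p q else Delta2 p q)"
      using Delta_sel[OF mm] by simp
    from sigma_choice[OF this] obtain \<sigma> where "\<sigma> \<in> {1,-1}"
      "(if m = mu1 then Delta1 p q else Delta2 p q) \<ge> 0"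
      "y = 1/4 + 2 * m - (p + q) / 2 + \<sigma> / 8 * sqrt (if m = mu1 then Delta1 p q else Delta2 p q)"
      by blast
    then show ?thesis using mm xe am A unfolding tcond_def Let_def
      by (intro exI[of _ m] exI[of _ \<sigma>] exI[of _ True]) simp
  next
    case B
    have be: "b = 1/2 - 2 * q - a" using B by simp
    have xe: "x = 1/4 - p - q - y" using l be am msq by algebra
    have "(8*(y - (- (p + q) / 2)))^2 = Delta3 p q"
      using Q(2) be am msq xe unfolding Q2_def Delta3_def by algebra
    from sigma_choice[OF this] obtain \<sigma> where "\<sigma> \<in> {1,-1}"
      "Delta3 p q \<ge> 0"
      "y = - (p + q) / 2 + \<sigma> / 8 * sqrt (Delta3 p q)"
      by blast
    then show ?thesis using mm xe am be unfolding tcond_def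
      by (intro exI[of _ m] exI[of _ \<sigma>] exI[of _ False]) simp
  qed
qed

lemma core_bwd:
  fixes a b x y p q :: real
  assumes mm: "m \<in> {mu1, mu2}" and sg: "\<sigma> \<in> {1, -1}" and T: "tcond a b x y p q m \<sigma> T"
  shows "Q1 a b x y p q = 0 \<and> Q2 a b x y p q = 0 \<and> Q3 a b x y p q = 0 \<and> Q4 a b x y p q = 0"
proof -
  have msq: "m^2 = m/2 + 1/8" using mu_sq[OF mm] .
  have s2: "\<sigma>^2 = 1" using sg by auto
  show ?thesis
  proof (cases T)
    case True
    define s where "s = sqrt (DA p q m)"
    have h: "DA p q m \<ge> 0" "y = 1/4 + 2 * m - (p + q) / 2 + \<sigma> / 8 * s"
         "x = 3/4 + 4 * m - p - q - y" "a = m - q" "b = a"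
      using T True Delta_sel[OF mm] unfolding tcond_def Let_def s_def by auto
    have ss: "s^2 = DA p q m" unfolding s_def using h(1) by simp
    show ?thesis unfolding Q1_def Q2_def Q3_def Q4_def
      using h(2-5) ss s2 msq unfolding DA_def
      by (intro conjI; algebra)
  next
    case False
    define s where "s = sqrt (Delta3 p q)"
    have h: "Delta3 p q \<ge> 0" "y = - (p + q) / 2 + \<sigma> / 8 * s"
         "x = 1/4 - p - q - y" "a = m - q" "b = 1/2 - 2 * q - a"
      using T False unfolding tcond_def s_def by auto
    have ss: "s^2 = Delta3 p q" unfolding s_def using h(1) by simp
    show ?thesis unfolding Q1_def Q2_def Q3_def Q4_def
      using h(2-5) ss s2 msq unfolding Delta3_def
      by (intro conjI; algebra)
  qed
qed


lemma param_iff: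
  "param_form c p q m \<sigma> T \<longleftrightarrow> c 3 2 = p \<and> c 3 3 = q \<and>
     tcond (c 3 1) (c 1 3) (c 2 2) (c 2 3) p q m \<sigma> T \<and> lin_form c"
  unfolding param_form_def tcond_def lin_form_def
  by (cases T) (auto simp: Let_def)

theorem mainTheorem9:
  fixes c :: "nat \<Rightarrow> nat \<Rightarrow> real"
  shows "all_equations c \<longleftrightarrow>
    (\<exists>p q \<mu> \<sigma> typeA. \<mu> \<in> {mu1, mu2} \<and> \<sigma> \<in> {1, -1} \<and>
       param_form c p q \<mu> \<sigma> typeA)"
proof
  assume "all_equations c"
  then have L: "lin_form c" and
    Q: "Q1 (c 3 1) (c 1 3) (c 2 2) (c 2 3) (c 3 2) (c 3 3) = 0"
       "Q2 (c 3 1) (c 1 3) (c 2 2) (c 2 3) (c 3 2) (c 3 3) = 0"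
       "Q3 (c 3 1) (c 1 3) (c 2 2) (c 2 3) (c 3 2) (c 3 3) = 0"
       "Q4 (c 3 1) (c 1 3) (c 2 2) (c 2 3) (c 3 2) (c 3 3) = 0"
    using all_eq_iff by blast+
  from core_fwd[OF Q] obtain m \<sigma> T where
    "m \<in> {mu1, mu2}" "\<sigma> \<in> {1, -1}" "tcond (c 3 1) (c 1 3) (c 2 2) (c 2 3) (c 3 2) (c 3 3) m \<sigma> T"
    by blast
  moreover have "param_form c (c 3 2) (c 3 3) m \<sigma> T"
    unfolding param_iff using L calculation(3) by simp
  ultimately show "\<exists>p q \<mu> \<sigma> typeA. \<mu> \<in> {mu1, mu2} \<and> \<sigma> \<in> {1, -1} \<and> param_form c p q \<mu> \<sigma> typeA"
    by (intro exI[of _ "c 3 2"] exI[of _ "c 3 3"] exI[of _ m] exI[of _ \<sigma>] exI[of _ T]) simp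
next
  assume "\<exists>p q \<mu> \<sigma> typeA. \<mu> \<in> {mu1, mu2} \<and> \<sigma> \<in> {1, -1} \<and> param_form c p q \<mu> \<sigma> typeA"
  then obtain p q m \<sigma> T where h: "m \<in> {mu1, mu2}" "\<sigma> \<in> {1, -1}" "param_form c p q m \<sigma> T"
    by blast
  then have e: "c 3 2 = p" "c 3 3 = q" and L: "lin_form c"
    and t: "tcond (c 3 1) (c 1 3) (c 2 2) (c 2 3) p q m \<sigma> T"
    using h(3) unfolding param_iff by simp_all
  show "all_equations c"
    unfolding all_eq_iff using core_bwd[OF h(1,2) t] e L by simp
qed

end
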